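(* The orthogonal projection $P_{V^\perp}$ of $\mathcal H$ onto $V^\perp$ is harmonic for the quantum Markov semigroup $(\mathcal T_t^* )_{t\ge0}$, i.e. $\mathcal L^*(P_{V^\perp})=0$; consequently the orthogonal projection $P_V$ onto $V$ is also harmonic.
   Context: Fix integers $N\ge 2$ and $n_1\ge n_2\ge\dots\ge n_N\ge 1$. Let $\mathcal H$ be a finite-dimensional complex Hilbert space with orthonormal basis $\{|-\rangle,|+\rangle\}\cup\{|a_k\rangle:1\le k\le N,\ 0\le a\le n_k-1\}$. For vectors $x,y$, $|x\rangle\langle y|$ denotes the operator $u\mapsto\langle y,u\rangle x$. Put $E_k=\mathrm{span}\{|a_k\rangle:0\le a\le n_k-1\}$, $P_k$ the orthogonal projection onto $E_k$, $P_\pm=|\pm\rangle\langle\pm|$, $\zeta_k=e^{2\pi i/n_k}$, and $\varphi_{a_k}=n_k^{-1/2}\sum_{b=0}^{n_k-1}\zeta_k^{-ba}|b_k\rangle$ for $0\le a\le n_k-1$. For $1\le k\le N-1$ let $Z_k=n_k^{-1/2}\sum_{b=0}^{n_{k+1}-1}\sum_{a=0}^{n_k-1}\zeta_k^{ba}|b_{k+1}\rangle\langle a_k|$ (an operator on $\mathcal H$), $|Z|_k=Z_k^*Z_k$. The transport operator is $Z=\sum_{k=1}^{N-1}Z_k$. Let $\omega$ range over the set $\{\omega_+,\omega_-,\omega_1,\dots,\omega_{N-1}\}$ of (distinct) Bohr frequencies, and let $\Gamma_{\pm,\omega}>0$, $\gamma_{\pm,\omega}\in\mathbb R$ be constants.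 Kraus operators: $L_{-,\omega_+}=\sqrt{n_1\Gamma_{-,\omega_+}}|\varphi_{0_1}\rangle\langle +|$, $L_{+,\omega_+}=\sqrt{n_1\Gamma_{+,\omega_+}}|+\rangle\langle\varphi_{0_1}|$, $L_{-,\omega_k}=\sqrt{\Gamma_{-,\omega_k}}Z_k$, $L_{+,\omega_k}=\sqrt{\Gamma_{+,\omega_k}}Z_k^*$ ($1\le k\le N-1$), $L_{-,\omega_-}=\sqrt{\Gamma_{-,\omega_-}}|-\rangle\langle\varphi_{0_N}|$, $L_{+,\omega_-}=0$. Effective Hamiltonian $H_{\mathrm{eff}}=n_1\gamma_{-,\omega_+}P_+-n_1\gamma_{+,\omega_+}|\varphi_{0_1}\rangle\langle\varphi_{0_1}|+\gamma_{-,\omega_-}|\varphi_{0_N}\rangle\langle\varphi_{0_N}|-\gamma_{+,\omega_-}P_-+\sum_{k=1}^{N-1}(\gamma_{-,\omega_k}|Z|_k-\gamma_{+,\omega_k}P_{k+1})$. The dual generator on $B(\mathcal H)$ is $\mathcal L^*(x)=i[H_{\mathrm{eff}},x]+\sum_{\omega}\sum_{\epsilon=\pm}\big(L_{\epsilon,\omega}^*xL_{\epsilon,\omega}-\tfrac12\{L_{\epsilon,\omega}^*L_{\epsilon,\omega},x\}\big)$ and $\mathcal T_t^*=e^{t\mathcal L^*}$. A selfadjoint $p$ is harmonic if $\mathcal T_t^*(p)=p$ for all $t\ge0$ (equivalently $\mathcal L^*(p)=0$). $V$ is the orthogonal complement of the set $\{|-\rangle,|+\rangle,Z^n\varphi_{0_1},Z^{*n}\varphi_{0_N},Z^{*s}\varphi_{0_{2m+1}}:0\le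 n\le N-1,\ 1\le m\le (N-1)/2,\ 1\le s\le 2m\}$. *)

theory Defs
  imports Complex_Main "HOL-Library.Function_Algebras"
begin

(* Basis labels of H:  |->,  |+>,  and  Ket k a = |a_k>  (1 <= k <= N, 0 <= a < n k). *)
datatype lab = KMinus | KPlus | Ket nat nat

datatype sgn = SMinus | SPlus

(* Bohr frequencies: omega_+, omega_-, omega_k (1 <= k <= N-1) *)
datatype freq = WPlus | WMinus | WLev nat

(* vectors and operators are represented in the orthonormal basis {|l> : l in labels N n} *)
type_synonym qvec = "lab \<Rightarrow> complex"
type_synonym qop = "lab \<Rightarrow> lab \<Rightarrow> complex"

definition labels :: "nat \<Rightarrow> (nat \<Rightarrow> nat) \<Rightarrow> lab set" where
  "labels N n = {KMinus, KPlus} \<union> {Ket k a | k a. 1 \<le> k \<and> k \<le> N \<and> a < n k}"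

definition vecs :: "lab set \<Rightarrow> qvec set" where
  "vecs I = {v. \<forall>i. i \<notin> I \<longrightarrow> v i = 0}"

definition ket :: "lab \<Rightarrow> qvec" where
  "ket l = (\<lambda>i. if i = l then 1 else 0)"

definition inner :: "lab set \<Rightarrow> qvec \<Rightarrow> qvec \<Rightarrow> complex" where
  "inner I x y = (\<Sum>i\<in>I. cnj (x i) * y i)"

definition outer :: "qvec \<Rightarrow> qvec \<Rightarrow> qop" where
  "outer x y = (\<lambda>i j. x i * cnj (y j))"

definition opmult :: "lab set \<Rightarrow> qop \<Rightarrow> qop \<Rightarrow> qop" where
  "opmult I A B = (\<lambda>i j. \<Sum>l\<in>I. A i l * B l j)"

definition opapp :: "lab set \<Rightarrow> qop \<Rightarrow> qvec \<Rightarrow> qvec" where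
  "opapp I A x = (\<lambda>i. \<Sum>j\<in>I. A i j * x j)"

definition adj :: "qop \<Rightarrow> qop" where
  "adj A = (\<lambda>i j. cnj (A j i))"

definition scl :: "complex \<Rightarrow> qop \<Rightarrow> qop" where
  "scl c A = (\<lambda>i j. c * A i j)"

fun oppow :: "lab set \<Rightarrow> qop \<Rightarrow> nat \<Rightarrow> qop" where
  "oppow I A 0 = (\<lambda>i j. if i \<in> I \<and> i = j then 1 else 0)"
| "oppow I A (Suc m) = opmult I A (oppow I A m)"

definition zeta :: "(nat \<Rightarrow> nat) \<Rightarrow> nat \<Rightarrow> complex" where
  "zeta n k = cis (2 * pi / real (n k))"

definition phi :: "(nat \<Rightarrow> nat) \<Rightarrow> nat \<Rightarrow> nat \<Rightarrow> qvec" where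
  "phi n k a = (\<lambda>i. case i of
       Ket k' b \<Rightarrow> if k' = k \<and> b < n k
                   then inverse (zeta n k) ^ (b * a) / complex_of_real (sqrt (real (n k)))
                   else 0
     | _ \<Rightarrow> 0)"

definition Zop :: "(nat \<Rightarrow> nat) \<Rightarrow> nat \<Rightarrow> qop" where
  "Zop n k = (\<lambda>i j. case (i, j) of
       (Ket k1 b, Ket k2 a) \<Rightarrow>
          if k1 = Suc k \<and> k2 = k \<and> b < n (Suc k) \<and> a < n k
          then zeta n k ^ (b * a) / complex_of_real (sqrt (real (n k)))
          else 0
     | _ \<Rightarrow> 0)"

definition Ztot :: "nat \<Rightarrow> (nat \<Rightarrow> nat) \<Rightarrow> qop" where
  "Ztot N n = (\<Sum>k\<in>{1..N-1}. Zop n k)"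

definition absZ :: "lab set \<Rightarrow> (nat \<Rightarrow> nat) \<Rightarrow> nat \<Rightarrow> qop" where
  "absZ I n k = opmult I (adj (Zop n k)) (Zop n k)"

definition Pk :: "(nat \<Rightarrow> nat) \<Rightarrow> nat \<Rightarrow> qop" where
  "Pk n k = (\<lambda>i j. if i = j \<and> (\<exists>a. a < n k \<and> i = Ket k a) then 1 else 0)"

definition freqs :: "nat \<Rightarrow> freq set" where
  "freqs N = {WPlus, WMinus} \<union> WLev ` {1..N-1}"

(* Effective Hamiltonian; gm w = gamma_{-,w}, gp w = gamma_{+,w} *)
definition Heff :: "nat \<Rightarrow> (nat \<Rightarrow> nat) \<Rightarrow> (freq \<Rightarrow> real) \<Rightarrow> (freq \<Rightarrow> real) \<Rightarrow> qop" where
  "Heff N n gm gp =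
     scl (of_real (real (n 1) * gm WPlus)) (outer (ket KPlus) (ket KPlus))
   - scl (of_real (real (n 1) * gp WPlus)) (outer (phi n 1 0) (phi n 1 0))
   + scl (of_real (gm WMinus)) (outer (phi n N 0) (phi n N 0))
   - scl (of_real (gp WMinus)) (outer (ket KMinus) (ket KMinus))
   + (\<Sum>k\<in>{1..N-1}. scl (of_real (gm (WLev k))) (absZ (labels N n) n k)
                     - scl (of_real (gp (WLev k))) (Pk n (Suc k)))"

(* Kraus operators L_{eps,w}; Gm w = Gamma_{-,w}, Gp w = Gamma_{+,w} *)
definition kraus :: "nat \<Rightarrow> (nat \<Rightarrow> nat) \<Rightarrow> (freq \<Rightarrow> real) \<Rightarrow> (freq \<Rightarrow> real)
                      \<Rightarrow> sgn \<Rightarrow> freq \<Rightarrow> qop" where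
  "kraus N n Gm Gp e w = (case (e, w) of
       (SMinus, WPlus) \<Rightarrow> scl (of_real (sqrt (real (n 1) * Gm WPlus))) (outer (phi n 1 0) (ket KPlus))
     | (SPlus, WPlus) \<Rightarrow> scl (of_real (sqrt (real (n 1) * Gp WPlus))) (outer (ket KPlus) (phi n 1 0))
     | (SMinus, WLev k) \<Rightarrow> scl (of_real (sqrt (Gm (WLev k)))) (Zop n k)
     | (SPlus, WLev k) \<Rightarrow> scl (of_real (sqrt (Gp (WLev k)))) (adj (Zop n k))
     | (SMinus, WMinus) \<Rightarrow> scl (of_real (sqrt (Gm WMinus))) (outer (ket KMinus) (phi n N 0))
     | (SPlus, WMinus) \<Rightarrow> 0)"

definition Lstar :: "nat \<Rightarrow> (nat \<Rightarrow> nat) \<Rightarrow> (freq \<Rightarrow> real) \<Rightarrow> (freq \<Rightarrow> real)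
                      \<Rightarrow> (freq \<Rightarrow> real) \<Rightarrow> (freq \<Rightarrow> real) \<Rightarrow> qop \<Rightarrow> qop" where
  "Lstar N n Gm Gp gm gp x =
     (let I = labels N n; H = Heff N n gm gp in
      scl \<i> (opmult I H x - opmult I x H)
      + (\<Sum>w\<in>freqs N. \<Sum>e\<in>{SMinus, SPlus}.
           (let L = kraus N n Gm Gp e w; LL = opmult I (adj L) L in
              opmult I (opmult I (adj L) x) L - scl (1/2) (opmult I LL x + opmult I x LL))))"

definition harmonic :: "nat \<Rightarrow> (nat \<Rightarrow> nat) \<Rightarrow> (freq \<Rightarrow> real) \<Rightarrow> (freq \<Rightarrow> real)
                      \<Rightarrow> (freq \<Rightarrow> real) \<Rightarrow> (freq \<Rightarrow> real) \<Rightarrow> qop \<Rightarrow> bool" where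
  "harmonic N n Gm Gp gm gp p \<longleftrightarrow>
     (\<forall>i\<in>labels N n. \<forall>j\<in>labels N n. adj p i j = p i j) \<and>
     (\<forall>i\<in>labels N n. \<forall>j\<in>labels N n. Lstar N n Gm Gp gm gp p i j = 0)"

definition orthc :: "lab set \<Rightarrow> qvec set \<Rightarrow> qvec set" where
  "orthc I S = {v \<in> vecs I. \<forall>s\<in>S. inner I s v = 0}"

definition gens :: "nat \<Rightarrow> (nat \<Rightarrow> nat) \<Rightarrow> qvec set" where
  "gens N n = (let I = labels N n; Z = Ztot N n in
     {ket KMinus, ket KPlus}
     \<union> {opapp I (oppow I Z m) (phi n 1 0) | m. m \<le> N - 1}
     \<union> {opapp I (oppow I (adj Z) m) (phi n N 0) | m. m \<le> N - 1}
     \<union> {opapp I (oppow I (adj Z) s) (phi n (2 * m + 1) 0) | m s.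
            1 \<le> m \<and> 2 * m \<le> N - 1 \<and> 1 \<le> s \<and> s \<le> 2 * m})"

definition Vsp :: "nat \<Rightarrow> (nat \<Rightarrow> nat) \<Rightarrow> qvec set" where
  "Vsp N n = orthc (labels N n) (gens N n)"

definition orth_proj :: "lab set \<Rightarrow> qvec set \<Rightarrow> qop \<Rightarrow> bool" where
  "orth_proj I W p \<longleftrightarrow>
     (\<forall>i j. i \<notin> I \<or> j \<notin> I \<longrightarrow> p i j = 0) \<and>
     (\<forall>v\<in>vecs I. opapp I p v \<in> W \<and> (\<forall>w\<in>W. inner I w (v - opapp I p v) = 0))"

end

theory Submission
  imports Defs "HOL-Library.Real_Mod"
begin

lemma sum_fun_app: "(sum f S) x = (\<Sum>s\<in>S. f s x)"
  by (induct S rule: infinite_finite_induct) auto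

lemma sum_fun_app2: "(sum f S) x y = (\<Sum>s\<in>S. f s x y)"
  by (simp add: sum_fun_app)

lemma opapp_opmult: "opapp I (opmult I A B) x = opapp I A (opapp I B x)"
  unfolding opapp_def opmult_def
  apply (rule ext)
  apply (simp add: sum_distrib_left sum_distrib_right mult.assoc)
  apply (rule sum.swap)
  done

lemma opmult_assoc: "opmult I (opmult I A B) C = opmult I A (opmult I B C)"
  unfolding opmult_def
  apply (intro ext)
  apply (simp add: sum_distrib_left sum_distrib_right mult.assoc)
  apply (rule sum.swap)
  done

lemma inner_adj: "inner I x (opapp I A y) = inner I (opapp I (adj A) x) y"
  unfolding inner_def opapp_def adj_def
  apply (simp add: sum_distrib_left sum_distrib_right mult_ac)
  apply (rule sum.swap)
  done

lemma opapp_diff: "opapp I A (x - y) = opapp I A x - opapp I A y"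
  unfolding opapp_def by (rule ext) (simp add: algebra_simps sum_subtractf)

lemma opapp_scale: "opapp I A (\<lambda>i. c * x i) = (\<lambda>i. c * opapp I A x i)"
  unfolding opapp_def by (rule ext) (simp add: sum_distrib_left mult_ac)

lemma inner_diff_right: "inner I x (y - z) = inner I x y - inner I x z"
  unfolding inner_def by (simp add: algebra_simps sum_subtractf)

lemma inner_scale_left: "inner I (\<lambda>i. c * x i) y = cnj c * inner I x y"
  unfolding inner_def by (simp add: sum_distrib_left mult_ac)

lemma inner_self_zero:
  assumes "finite I" "inner I d d = 0" "i \<in> I"
  shows "d i = 0"
proof -
  have e: "\<And>z. cnj z * z = complex_of_real ((cmod z)^2)"
    by (metis complex_mult_cnj complex_norm_square mult.commute)
  have "(\<Sum>l\<in>I. cnj (d l) * d l) = complex_of_real (\<Sum>l\<in>I. (cmod (d l))^2)"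
    by (simp only: e of_real_sum)
  hence "complex_of_real (\<Sum>l\<in>I. (cmod (d l))^2) = 0"
    using assms(2) unfolding inner_def by simp
  hence "(\<Sum>l\<in>I. (cmod (d l))^2) = 0" by (simp only: of_real_eq_0_iff)
  hence "\<forall>l\<in>I. (cmod (d l))^2 = 0"
    using assms(1) by (subst (asm) sum_nonneg_eq_0_iff) auto
  thus ?thesis using assms(3) by auto
qed

lemma opapp_ket: "finite I \<Longrightarrow> j \<in> I \<Longrightarrow> opapp I A (ket j) = (\<lambda>i. A i j)"
  unfolding opapp_def ket_def by (rule ext) (simp add: if_distrib sum.delta cong: if_cong)

lemma ket_vecs: "ket j \<in> vecs I" if "j \<in> I" using that unfolding ket_def vecs_def by auto

lemma orth_proj_zero: "orth_proj I X p \<Longrightarrow> i \<notin> I \<Longrightarrow> opapp I p v i = 0"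
  unfolding orth_proj_def opapp_def by auto

lemma orth_proj_vecs: "orth_proj I X p \<Longrightarrow> opapp I p v \<in> vecs I"
  using orth_proj_zero unfolding vecs_def by blast

lemma comm_proj:
  assumes fin: "finite I" and op: "orth_proj I X p"
    and sub: "\<forall>x\<in>X. \<forall>y\<in>X. x - y \<in> X"
    and invB: "\<forall>x\<in>X. opapp I B x \<in> X"
    and invBs: "\<forall>x\<in>X. opapp I (adj B) x \<in> X"
    and vB: "\<forall>v\<in>vecs I. opapp I B v \<in> vecs I"
    and ij: "i \<in> I" "j \<in> I"
  shows "opmult I p B i j = opmult I B p i j"
proof -
  let ?v = "ket j"
  have v: "?v \<in> vecs I" by (rule ket_vecs[OF ij(2)])
  let ?u = "opapp I B ?v"
  have u: "?u \<in> vecs I" using vB v by blast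
  let ?w1 = "opapp I p ?u" and ?w2 = "opapp I B (opapp I p ?v)"
  have w1X: "?w1 \<in> X" using op u unfolding orth_proj_def by blast
  have pvX: "opapp I p ?v \<in> X" using op v unfolding orth_proj_def by blast
  have w2X: "?w2 \<in> X" using invB pvX by blast
  let ?d = "?w2 - ?w1"
  have dX: "?d \<in> X" using sub w1X w2X by blast
  have o1: "inner I x (?u - ?w1) = 0" if "x \<in> X" for x
    using op u that unfolding orth_proj_def by blast
  have o2: "inner I x (?u - ?w2) = 0" if "x \<in> X" for x
  proof -
    have "?u - ?w2 = opapp I B (?v - opapp I p ?v)" by (simp add: opapp_diff)
    hence "inner I x (?u - ?w2) = inner I (opapp I (adj B) x) (?v - opapp I p ?v)"
      by (simp add: inner_adj)
    also have "\<dots> = 0" using op v invBs that unfolding orth_proj_def by blast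
    finally show ?thesis .
  qed
  have "?d = (?u - ?w1) - (?u - ?w2)" by simp
  hence "inner I ?d ?d = 0" using o1[OF dX] o2[OF dX] by (simp add: inner_diff_right)
  hence "?d i = 0" using inner_self_zero fin ij by blast
  hence "?w1 i = ?w2 i" by simp
  moreover have "?w1 i = opmult I p B i j"
    unfolding opapp_ket[OF fin ij(2)] by (simp add: opapp_def opmult_def)
  moreover have "?w2 i = opmult I B p i j"
    unfolding opapp_ket[OF fin ij(2)] by (simp add: opapp_def opmult_def)
  ultimately show ?thesis by simp
qed

lemma proj_herm:
  assumes fin: "finite I" and op: "orth_proj I X p" and ij: "i \<in> I" "j \<in> I"
  shows "adj p i j = p i j"
proof -
  define M where "M a b = inner I (opapp I p (ket a)) (opapp I p (ket b))" for a b
  have key: "cnj (p b a) = M a b" if "a \<in> I" "b \<in> I" for a b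
  proof -
    have pa: "opapp I p (ket a) \<in> X" using op ket_vecs[OF that(1)] unfolding orth_proj_def by blast
    have "inner I (opapp I p (ket a)) (ket b - opapp I p (ket b)) = 0"
      using op ket_vecs[OF that(2)] pa unfolding orth_proj_def by blast
    hence "inner I (opapp I p (ket a)) (ket b) = M a b" unfolding M_def by (simp add: inner_diff_right)
    moreover have "inner I (opapp I p (ket a)) (ket b) = cnj (p b a)"
      using that fin unfolding opapp_ket[OF fin that(1)] unfolding inner_def ket_def
      by (simp add: if_distrib sum.delta cong: if_cong)
    ultimately show ?thesis by simp
  qed
  have Ms: "M b a = cnj (M a b)" for a b unfolding M_def inner_def by (simp add: mult.commute)
  have "p i j = cnj (M j i)" using key[OF ij(2) ij(1)] Ms by (metis complex_cnj_cnj)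
  also have "\<dots> = M i j" using Ms by (metis complex_cnj_cnj)
  also have "\<dots> = cnj (p j i)" using key[OF ij] by simp
  finally show ?thesis unfolding adj_def by simp
qed


lemma zeta_pow: "zeta n k ^ m = cis (2 * pi * real m / real (n k))"
  unfolding zeta_def DeMoivre by (simp add: field_simps)

lemma inv_zeta_pow: "inverse (zeta n k) ^ m = cnj (zeta n k ^ m)"
  unfolding zeta_def by (simp add: cis_inverse cis_cnj power_inverse DeMoivre flip: cis_inverse)

lemma ortho:
  assumes m: "n k > 0" and b: "b < n k" and b': "b' < n k"
  shows "(\<Sum>a<n k. zeta n k ^ (b * a) * cnj (zeta n k ^ (b' * a))) = (if b = b' then of_nat (n k) else 0)"
proof -
  define m where "m = n k"
  define d where "d = real b - real b'"
  define w where "w = cis (2 * pi * d / real m)"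
  have t: "zeta n k ^ (b * a) * cnj (zeta n k ^ (b' * a)) = w ^ a" for a
  proof -
    have "zeta n k ^ (b * a) * cnj (zeta n k ^ (b' * a))
        = cis (2 * pi * real (b*a) / real m) * cis (- (2 * pi * real (b'*a) / real m))"
      by (simp add: zeta_pow cis_cnj m_def)
    also have "\<dots> = cis (real a * (2 * pi * d / real m))"
      by (simp add: cis_mult d_def field_simps diff_divide_distrib)
    also have "\<dots> = w ^ a" by (simp add: w_def DeMoivre)
    finally show ?thesis .
  qed
  show ?thesis
  proof (cases "b = b'")
    case True
    hence "w = 1" by (simp add: w_def d_def)
    have "(\<Sum>a<n k. zeta n k ^ (b * a) * cnj (zeta n k ^ (b' * a))) = (\<Sum>a<n k. w ^ a)"
      by (rule sum.cong) (simp_all only: t)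
    thus ?thesis using True \<open>w = 1\<close> by simp
  next
    case False
    have mpos: "real m > 0" using m by (simp add: m_def)
    have w1: "w \<noteq> 1"
    proof
      assume "w = 1"
      then obtain z :: int where z: "2 * pi * d / real m = of_int z * (2 * pi)"
        unfolding w_def cis_eq_1_iff by blast
      hence dz: "d = of_int z * real m" using mpos by (simp add: field_simps)
      have "\<bar>d\<bar> < real m" using b b' by (simp add: d_def m_def)
      hence "\<bar>of_int z\<bar> * real m < 1 * real m" using dz by (simp add: abs_mult)
      hence "\<bar>z\<bar> < 1" using mpos by (metis mult_less_cancel_right_pos of_int_less_1_iff of_int_abs)
      hence "z = 0" by simp
      hence "d = 0" using dz by simp
      thus False using False by (simp add: d_def)
    qed
    have "w ^ m = cis (2 * pi * d)" using mpos by (simp add: w_def DeMoivre)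
    also have "\<dots> = 1"
    proof -
      have "d \<in> \<int>" unfolding d_def by (intro Ints_diff Ints_of_nat)
      thus ?thesis by (rule cis_multiple_2pi)
    qed
    finally have wm: "w ^ m = 1" .
    have "(\<Sum>a<n k. zeta n k ^ (b * a) * cnj (zeta n k ^ (b' * a))) = (\<Sum>a<m. w ^ a)"
      unfolding m_def by (rule sum.cong) (simp_all only: t)
    also have "\<dots> = 0" using geometric_sum[OF w1, of m] wm by simp
    finally show ?thesis using False by simp
  qed
qed


locale qms =
  fixes N :: nat and n :: "nat \<Rightarrow> nat"
  assumes N2: "N \<ge> 2"
    and mono: "\<forall>k. 1 \<le> k \<and> k < N \<longrightarrow> n (Suc k) \<le> n k"
    and nN: "n N \<ge> 1"
begin

abbreviation "I \<equiv> labels N n"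
abbreviation "Z \<equiv> Ztot N n"
abbreviation "Zs \<equiv> adj (Ztot N n)"
abbreviation "pw A m x \<equiv> opapp I (oppow I A m) x"

lemma n_ge_N: "d \<le> N - 1 \<Longrightarrow> n N \<le> n (N - d)"
proof (induction d)
  case 0 then show ?case by simp
next
  case (Suc d)
  have "n (Suc (N - Suc d)) \<le> n (N - Suc d)" using mono Suc.prems by auto
  moreover have "Suc (N - Suc d) = N - d" using Suc.prems by simp
  ultimately show ?case using Suc by simp
qed

lemma n_pos: "1 \<le> k \<Longrightarrow> k \<le> N \<Longrightarrow> n k > 0"
proof -
  assume a: "1 \<le> k" "k \<le> N"
  have "N - k \<le> N - 1" using a by simp
  hence "n N \<le> n (N - (N - k))" by (rule n_ge_N)
  moreover have "N - (N - k) = k" using a by simp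
  ultimately show ?thesis using nN by simp
qed

lemma n_mono: "1 \<le> k \<Longrightarrow> k < N \<Longrightarrow> n (Suc k) \<le> n k"
  using mono by blast

lemma fin: "finite I"
proof -
  have "{Ket k a | k a. 1 \<le> k \<and> k \<le> N \<and> a < n k} \<subseteq> (\<Union>k\<in>{1..N}. Ket k ` {..<n k})" by auto
  hence "finite {Ket k a | k a. 1 \<le> k \<and> k \<le> N \<and> a < n k}" by (rule finite_subset) auto
  thus ?thesis unfolding labels_def by simp
qed

lemma Ket_I: "1 \<le> k \<Longrightarrow> k \<le> N \<Longrightarrow> a < n k \<Longrightarrow> Ket k a \<in> I"
  unfolding labels_def by auto

lemma KPM_I[simp]: "KPlus \<in> I" "KMinus \<in> I"
  unfolding labels_def by auto

lemma Ket_I_iff: "Ket k a \<in> I \<longleftrightarrow> 1 \<le> k \<and> k \<le> N \<and> a < n k"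
  unfolding labels_def by auto

definition lev :: "nat \<Rightarrow> qvec \<Rightarrow> bool" where
  "lev j x \<longleftrightarrow> (\<forall>i. x i \<noteq> 0 \<longrightarrow> (\<exists>b. b < n j \<and> i = Ket j b))"

lemma sum_lev:
  assumes j: "1 \<le> j" "j \<le> N" and f: "\<And>l. (\<forall>a. a < n j \<longrightarrow> l \<noteq> Ket j a) \<Longrightarrow> f l = 0"
  shows "(\<Sum>l\<in>I. f l) = (\<Sum>a<n j. f (Ket j a))"
proof -
  have sub: "Ket j ` {..<n j} \<subseteq> I" using Ket_I j by auto
  have "(\<Sum>l\<in>I. f l) = (\<Sum>l\<in>Ket j ` {..<n j}. f l)"
    by (rule sum.mono_neutral_right[OF fin sub]) (use f in auto)
  also have "\<dots> = (\<Sum>a<n j. f (Ket j a))" by (subst sum.reindex) (auto simp: inj_on_def)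
  finally show ?thesis .
qed

lemma Ztot_Ket: "Z (Ket k1 b) (Ket k2 a) =
   (if k1 = Suc k2 \<and> 1 \<le> k2 \<and> k2 \<le> N - 1 \<and> b < n k1 \<and> a < n k2
    then zeta n k2 ^ (b * a) / complex_of_real (sqrt (real (n k2))) else 0)"
proof -
  have "Z (Ket k1 b) (Ket k2 a) = (\<Sum>k\<in>{1..N-1}. Zop n k (Ket k1 b) (Ket k2 a))"
    unfolding Ztot_def sum_fun_app2 ..
  also have "\<dots> = (\<Sum>k\<in>{1..N-1}. if k = k2 then (if k1 = Suc k2 \<and> b < n k1 \<and> a < n k2
    then zeta n k2 ^ (b * a) / complex_of_real (sqrt (real (n k2))) else 0) else 0)"
    by (rule sum.cong) (auto simp: Zop_def)
  also have "\<dots> = (if k1 = Suc k2 \<and> 1 \<le> k2 \<and> k2 \<le> N - 1 \<and> b < n k1 \<and> a < n k2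
    then zeta n k2 ^ (b * a) / complex_of_real (sqrt (real (n k2))) else 0)"
    by (cases "k1 = Suc k2 \<and> 1 \<le> k2 \<and> k2 \<le> N - 1 \<and> b < n k1 \<and> a < n k2")
       (simp_all only: sum.delta[OF finite_atLeastAtMost] atLeastAtMost_iff if_True if_False, auto)
  finally show ?thesis .
qed

lemma Zop_nK[simp]: "Zop n k KPlus l = 0" "Zop n k KMinus l = 0" "Zop n k i KPlus = 0" "Zop n k i KMinus = 0"
  unfolding Zop_def by (auto split: lab.split)

lemma Ztot_nK[simp]: "Z KPlus l = 0" "Z KMinus l = 0" "Z i KPlus = 0" "Z i KMinus = 0"
  unfolding Ztot_def sum_fun_app2 by simp_all


lemma lev_vecs: "lev j x \<Longrightarrow> 1 \<le> j \<Longrightarrow> j \<le> N \<Longrightarrow> x \<in> vecs I"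
  unfolding lev_def vecs_def using Ket_I by blast

lemma lev_scale: "lev j x \<Longrightarrow> lev j (\<lambda>i. c * x i)"
  unfolding lev_def by auto

lemma lev_phi: "lev j (phi n j a)"
  unfolding lev_def phi_def by (auto split: lab.splits if_splits)

lemma lev_ket: "b < n j \<Longrightarrow> lev j (ket (Ket j b))"
  unfolding lev_def ket_def by auto

lemma lev_out: "lev j x \<Longrightarrow> (\<And>b. b < n j \<Longrightarrow> i \<noteq> Ket j b) \<Longrightarrow> x i = 0"
  unfolding lev_def by blast

lemma sum_nz: "(\<Sum>l\<in>A. f l) \<noteq> 0 \<Longrightarrow> \<exists>l\<in>A. f l \<noteq> 0"
  by (meson sum.neutral)

lemma lev_Z: assumes "lev j x" shows "lev (Suc j) (opapp I Z x)"
  unfolding lev_def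
proof (intro allI impI)
  fix i assume "opapp I Z x i \<noteq> 0"
  then obtain l where l: "Z i l * x l \<noteq> 0" unfolding opapp_def using sum_nz by blast
  then obtain a where a: "a < n j" "l = Ket j a" using assms unfolding lev_def by force
  show "\<exists>b<n (Suc j). i = Ket (Suc j) b"
  proof (cases i)
    case (Ket k1 b)
    then show ?thesis using l a by (auto simp: Ztot_Ket split: if_splits)
  qed (use l in auto)
qed

lemma lev_Zs: assumes "lev (Suc j) x" shows "lev j (opapp I Zs x)"
  unfolding lev_def
proof (intro allI impI)
  fix i assume "opapp I Zs x i \<noteq> 0"
  then obtain l where l: "Zs i l * x l \<noteq> 0" unfolding opapp_def using sum_nz by blast
  then obtain a where a: "a < n (Suc j)" "l = Ket (Suc j) a" using assms unfolding lev_def by force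
  show "\<exists>b<n j. i = Ket j b"
  proof (cases i)
    case (Ket k1 b)
    then show ?thesis using l a by (auto simp: Ztot_Ket adj_def split: if_splits)
  qed (use l in \<open>auto simp: adj_def\<close>)
qed

lemma Zop_lev:
  assumes x: "lev j x" and k: "1 \<le> k" "k \<le> N - 1"
  shows "opapp I (Zop n k) x = (if k = j then opapp I Z x else 0)"
proof -
  have t: "Zop n k i l * x l = (if k = j then Z i l * x l else 0)" for i l
  proof (cases "x l = 0")
    case False
    then obtain a where a: "a < n j" "l = Ket j a" using x unfolding lev_def by force
    show ?thesis using a k by (cases i) (auto simp: Zop_def Ztot_Ket)
  qed simp
  show ?thesis unfolding opapp_def by (rule ext) (simp add: t)
qed

lemma adjZop_lev:
  assumes x: "lev j x" and k: "1 \<le> k" "k \<le> N - 1"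
  shows "opapp I (adj (Zop n k)) x = (if j = Suc k then opapp I Zs x else 0)"
proof -
  have t: "adj (Zop n k) i l * x l = (if j = Suc k then Zs i l * x l else 0)" for i l
  proof (cases "x l = 0")
    case False
    then obtain a where a: "a < n j" "l = Ket j a" using x unfolding lev_def by force
    show ?thesis using a k by (cases i) (auto simp: Zop_def Ztot_Ket adj_def)
  qed simp
  show ?thesis unfolding opapp_def by (rule ext) (simp add: t)
qed

lemma Pk_lev:
  assumes x: "lev j x" and j: "1 \<le> j" "j \<le> N"
  shows "opapp I (Pk n j') x = (if j' = j then x else 0)"
proof (rule ext)
  fix i
  have t: "Pk n j' i l * x l = (if l = i then (if (\<exists>a. a < n j' \<and> i = Ket j' a) then x i else 0) else 0)" for l
    unfolding Pk_def by auto
  have "opapp I (Pk n j') x i = (if i \<in> I then (if (\<exists>a. a < n j' \<and> i = Ket j' a) then x i else 0) else 0)"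
    unfolding opapp_def t using fin by (simp add: sum.delta')
  also have "\<dots> = (if j' = j then x else 0) i"
  proof (cases "x i = 0")
    case False
    then obtain a where a: "a < n j" "i = Ket j a" using x unfolding lev_def by force
    thus ?thesis using Ket_I j by auto
  qed simp
  finally show "opapp I (Pk n j') x i = (if j' = j then x else 0) i" .
qed

lemma ketPM_ops:
  "opapp I (Zop n k) (ket KPlus) = 0" "opapp I (Zop n k) (ket KMinus) = 0"
  "opapp I (adj (Zop n k)) (ket KPlus) = 0" "opapp I (adj (Zop n k)) (ket KMinus) = 0"
  "opapp I (Pk n j) (ket KPlus) = 0" "opapp I (Pk n j) (ket KMinus) = 0"
  by (auto simp: opapp_ket[OF fin] adj_def Pk_def)


lemma sqrt_sq_c: "complex_of_real (sqrt (real m)) * complex_of_real (sqrt (real m)) = of_nat m"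
  by (simp flip: of_real_mult)

lemma cnj_sqrt_c[simp]: "cnj (complex_of_real (sqrt r)) = complex_of_real (sqrt r)"
  by simp

lemma K1:
  assumes k: "1 \<le> k" "k \<le> N - 1"
  shows "opapp I Zs (ket (Ket (Suc k) 0)) = phi n k 0"
proof -
  have "Ket (Suc k) 0 \<in> I" using k n_pos[of "Suc k"] by (intro Ket_I) auto
  hence "opapp I Zs (ket (Ket (Suc k) 0)) = (\<lambda>i. Zs i (Ket (Suc k) 0))" by (rule opapp_ket[OF fin])
  also have "\<dots> = phi n k 0"
  proof (rule ext)
    fix i show "Zs i (Ket (Suc k) 0) = phi n k 0 i"
      using k n_pos[of "Suc k"] by (cases i) (auto simp: adj_def Ztot_Ket phi_def)
  qed
  finally show ?thesis .
qed

lemma K2: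
  assumes k: "1 \<le> k" "k \<le> N - 1"
  shows "opapp I Z (ket (Ket k 0)) = (\<lambda>i. complex_of_real (sqrt (real (n (Suc k))) / sqrt (real (n k))) * phi n (Suc k) 0 i)"
proof -
  have "Ket k 0 \<in> I" using k n_pos[of k] by (intro Ket_I) auto
  hence "opapp I Z (ket (Ket k 0)) = (\<lambda>i. Z i (Ket k 0))" by (rule opapp_ket[OF fin])
  also have "\<dots> = (\<lambda>i. complex_of_real (sqrt (real (n (Suc k))) / sqrt (real (n k))) * phi n (Suc k) 0 i)"
  proof (rule ext)
    fix i
    have p1: "n (Suc k) > 0" "n k > 0" using k n_pos[of "Suc k"] n_pos[of k] by auto
    show "Z i (Ket k 0) = complex_of_real (sqrt (real (n (Suc k))) / sqrt (real (n k))) * phi n (Suc k) 0 i"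
      using k p1 by (cases i) (auto simp: Ztot_Ket phi_def)
  qed
  finally show ?thesis .
qed

lemma K3:
  assumes k: "1 \<le> k" "k \<le> N - 1"
  shows "opapp I Z (phi n k 0) = ket (Ket (Suc k) 0)"
proof (rule ext)
  fix i
  have nk: "n k > 0" using k n_pos[of k] by auto
  have mk: "n (Suc k) \<le> n k" using k n_mono[of k] by auto
  have "opapp I Z (phi n k 0) i = (\<Sum>a<n k. Z i (Ket k a) * phi n k 0 (Ket k a))"
    unfolding opapp_def
    by (rule sum_lev) (use k lev_out[OF lev_phi] in auto)
  also have "\<dots> = ket (Ket (Suc k) 0) i"
  proof (cases "\<exists>b. b < n (Suc k) \<and> i = Ket (Suc k) b")
    case True
    then obtain b where b: "b < n (Suc k)" "i = Ket (Suc k) b" by blast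
    let ?s = "complex_of_real (sqrt (real (n k)))"
    have "(\<Sum>a<n k. Z i (Ket k a) * phi n k 0 (Ket k a))
        = (\<Sum>a<n k. zeta n k ^ (b * a) * cnj (zeta n k ^ (0 * a)) / (?s * ?s))"
      by (rule sum.cong) (use b k in \<open>auto simp: Ztot_Ket phi_def\<close>)
    also have "\<dots> = (\<Sum>a<n k. zeta n k ^ (b * a) * cnj (zeta n k ^ (0 * a))) / (?s * ?s)"
      by (simp add: sum_divide_distrib)
    also have "\<dots> = (if b = 0 then of_nat (n k) else 0) / of_nat (n k)"
      using ortho[of n k b 0] nk b mk by (simp only: sqrt_sq_c)
    also have "\<dots> = ket (Ket (Suc k) 0) i" using b nk by (simp add: ket_def)
    finally show ?thesis .
  next
    case False
    have "Z i (Ket k a) = 0" for a using False by (cases i) (auto simp: Ztot_Ket)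
    thus ?thesis using False n_pos[of "Suc k"] k by (auto simp: ket_def)
  qed
  finally show "opapp I Z (phi n k 0) i = ket (Ket (Suc k) 0) i" .
qed


lemma K4:
  assumes x: "lev j x" and j: "2 \<le> j" "j \<le> N"
  shows "opapp I Z (opapp I Zs x) = x"
proof (rule ext)
  fix i
  define k where "k = j - 1"
  have jk: "j = Suc k" and k: "1 \<le> k" "k \<le> N - 1" using j by (auto simp: k_def)
  have nk: "n k > 0" using k n_pos[of k] by auto
  have mk: "n j \<le> n k" using k n_mono[of k] jk by auto
  let ?y = "opapp I Zs x"
  have ylev: "lev k ?y" using lev_Zs x jk by simp
  have y: "?y (Ket k a) = (\<Sum>b'<n j. cnj (Z (Ket j b') (Ket k a)) * x (Ket j b'))" for a
    unfolding opapp_def adj_def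
    by (rule sum_lev) (use j lev_out[OF x] in auto)
  have "opapp I Z ?y i = (\<Sum>a<n k. Z i (Ket k a) * ?y (Ket k a))"
    unfolding opapp_def[of I Z ?y]
    by (rule sum_lev) (use k lev_out[OF ylev] in simp_all)
  also have "\<dots> = x i"
  proof (cases "\<exists>b. b < n j \<and> i = Ket j b")
    case True
    then obtain b where b: "b < n j" "i = Ket j b" by blast
    let ?s = "complex_of_real (sqrt (real (n k)))"
    let ?z = "zeta n k"
    have "(\<Sum>a<n k. Z i (Ket k a) * ?y (Ket k a))
        = (\<Sum>a<n k. \<Sum>b'<n j. x (Ket j b') * (?z ^ (b * a) * cnj (?z ^ (b' * a))) / (?s * ?s))"
    proof (rule sum.cong)
      fix a assume a: "a \<in> {..<n k}"
      have "Z i (Ket k a) * ?y (Ket k a) = (?z ^ (b * a) / ?s) * (\<Sum>b'<n j. cnj (?z ^ (b' * a) / ?s) * x (Ket j b'))"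
        unfolding y
        by (rule arg_cong2[where f="(*)"], use a b k jk in \<open>simp add: Ztot_Ket\<close>, rule sum.cong, use a k jk in \<open>auto simp: Ztot_Ket\<close>)
      also have "\<dots> = (\<Sum>b'<n j. x (Ket j b') * (?z ^ (b * a) * cnj (?z ^ (b' * a))) / (?s * ?s))"
        by (simp add: sum_distrib_left field_simps)
      finally show "Z i (Ket k a) * ?y (Ket k a) = (\<Sum>b'<n j. x (Ket j b') * (?z ^ (b * a) * cnj (?z ^ (b' * a))) / (?s * ?s))" .
    qed simp
    also have "\<dots> = (\<Sum>b'<n j. \<Sum>a<n k. x (Ket j b') * (?z ^ (b * a) * cnj (?z ^ (b' * a))) / (?s * ?s))"
      by (rule sum.swap)
    also have "\<dots> = (\<Sum>b'<n j. x (Ket j b') * (\<Sum>a<n k. ?z ^ (b * a) * cnj (?z ^ (b' * a))) / (?s * ?s))"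
      by (simp add: sum_distrib_left sum_divide_distrib)
    also have "\<dots> = (\<Sum>b'<n j. x (Ket j b') * (if b = b' then of_nat (n k) else 0) / of_nat (n k))"
    proof (rule sum.cong)
      fix b' assume "b' \<in> {..<n j}"
      hence "b' < n k" using mk by simp
      thus "x (Ket j b') * (\<Sum>a<n k. ?z ^ (b * a) * cnj (?z ^ (b' * a))) / (?s * ?s)
          = x (Ket j b') * (if b = b' then of_nat (n k) else 0) / of_nat (n k)"
        using ortho[of n k b b'] nk b mk by (simp only: sqrt_sq_c)
    qed simp
    also have "\<dots> = (\<Sum>b'<n j. if b' = b then x (Ket j b) else 0)"
      by (rule sum.cong) (use nk in auto)
    also have "\<dots> = x i" using b by simp
    finally show ?thesis .
  next
    case False
    have "Z i (Ket k a) = 0" for a using False jk by (cases i) (auto simp: Ztot_Ket)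
    moreover have "x i = 0" using lev_out[OF x] False by blast
    ultimately show ?thesis by simp
  qed
  finally show "opapp I Z ?y i = x i" .
qed


lemma pw_Suc: "pw A (Suc m) x = opapp I A (pw A m x)"
  by (simp add: opapp_opmult)

lemma pw_0: "x \<in> vecs I \<Longrightarrow> pw A 0 x = x"
proof (rule ext)
  fix i assume x: "x \<in> vecs I"
  have "pw A 0 x i = (\<Sum>j\<in>I. (if i \<in> I \<and> i = j then 1 else 0) * x j)" by (simp add: opapp_def)
  also have "\<dots> = (\<Sum>j\<in>I. if j = i then (if i \<in> I then x i else 0) else 0)"
    by (rule sum.cong) auto
  also have "\<dots> = x i" using fin x by (simp add: vecs_def)
  finally show "pw A 0 x i = x i" .
qed

lemma phi_vecs: "1 \<le> j \<Longrightarrow> j \<le> N \<Longrightarrow> phi n j a \<in> vecs I"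
  using lev_vecs lev_phi by blast

lemma gens_iff: "g \<in> gens N n \<longleftrightarrow> g = ket KMinus \<or> g = ket KPlus
   \<or> (\<exists>m. m \<le> N - 1 \<and> g = pw Z m (phi n 1 0))
   \<or> (\<exists>m. m \<le> N - 1 \<and> g = pw Zs m (phi n N 0))
   \<or> (\<exists>m s. 1 \<le> m \<and> 2 * m \<le> N - 1 \<and> 1 \<le> s \<and> s \<le> 2 * m \<and> g = pw Zs s (phi n (2 * m + 1) 0))"
  unfolding gens_def Let_def by blast

definition gperp :: "qvec \<Rightarrow> bool" where
  "gperp x \<longleftrightarrow> (\<forall>v\<in>Vsp N n. inner I x v = 0)"

lemma gperp_gen: "g \<in> gens N n \<Longrightarrow> gperp g"
  unfolding gperp_def Vsp_def orthc_def by blast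

lemma gperp_scale: "gperp x \<Longrightarrow> gperp (\<lambda>i. c * x i)"
  unfolding gperp_def by (simp add: inner_scale_left)

lemma gperp_zero: "gperp 0"
  unfolding gperp_def inner_def by simp

lemma a_form: "m \<le> N - 1 \<Longrightarrow> \<exists>\<alpha>::real. \<alpha> > 0 \<and> pw Z m (phi n 1 0) =
    (\<lambda>i. complex_of_real \<alpha> * (if even m then phi n (Suc m) 0 i else ket (Ket (Suc m) 0) i))"
proof (induction m)
  case 0
  have "pw Z 0 (phi n 1 0) = phi n 1 0" using N2 by (intro pw_0 phi_vecs) auto
  thus ?case by (intro exI[of _ 1]) simp
next
  case (Suc m)
  then obtain \<alpha> :: real where al: "\<alpha> > 0" and eq: "pw Z m (phi n 1 0) =
    (\<lambda>i. complex_of_real \<alpha> * (if even m then phi n (Suc m) 0 i else ket (Ket (Suc m) 0) i))" by auto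
  have k: "1 \<le> Suc m" "Suc m \<le> N - 1" using Suc.prems by auto
  show ?case
  proof (cases "even m")
    case True
    have "pw Z (Suc m) (phi n 1 0) = (\<lambda>i. complex_of_real \<alpha> * opapp I Z (phi n (Suc m) 0) i)"
      unfolding pw_Suc eq using True by (simp add: opapp_scale)
    also have "\<dots> = (\<lambda>i. complex_of_real \<alpha> * ket (Ket (Suc (Suc m)) 0) i)" using K3[OF k] by simp
    finally show ?thesis using True al by (intro exI[of _ \<alpha>]) simp
  next
    case False
    define c where "c = sqrt (real (n (Suc (Suc m)))) / sqrt (real (n (Suc m)))"
    have c: "c > 0" unfolding c_def using n_pos[of "Suc m"] n_pos[of "Suc (Suc m)"] k by auto
    have "pw Z (Suc m) (phi n 1 0) = (\<lambda>i. complex_of_real \<alpha> * opapp I Z (ket (Ket (Suc m) 0)) i)"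
      unfolding pw_Suc eq using False by (simp add: opapp_scale)
    also have "\<dots> = (\<lambda>i. complex_of_real (\<alpha> * c) * phi n (Suc (Suc m)) 0 i)"
      using K2[OF k] by (simp add: c_def mult.assoc)
    finally show ?thesis using False al c by (intro exI[of _ "\<alpha> * c"]) simp
  qed
qed

lemma a_lev: "m \<le> N - 1 \<Longrightarrow> lev (Suc m) (pw Z m (phi n 1 0))"
proof -
  assume m: "m \<le> N - 1"
  then obtain \<alpha> :: real where eq: "pw Z m (phi n 1 0) =
    (\<lambda>i. complex_of_real \<alpha> * (if even m then phi n (Suc m) 0 i else ket (Ket (Suc m) 0) i))"
    using a_form by blast
  have "lev (Suc m) (\<lambda>i. if even m then phi n (Suc m) 0 i else ket (Ket (Suc m) 0) i)"
    using lev_phi[of "Suc m" 0] lev_ket[of 0 "Suc m"] n_pos[of "Suc m"] m N2 by (cases "even m") auto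
  thus ?thesis unfolding eq by (rule lev_scale)
qed

lemma zs_lev: "lev j x \<Longrightarrow> 1 \<le> j \<Longrightarrow> j \<le> N \<Longrightarrow> s < j \<Longrightarrow> lev (j - s) (pw Zs s x)"
proof (induction s)
  case 0
  thus ?case using pw_0 lev_vecs by simp
next
  case (Suc s)
  hence "lev (Suc (j - Suc s)) (pw Zs s x)" using Suc_diff_Suc by simp
  thus ?case unfolding pw_Suc by (rule lev_Zs)
qed

lemma phi_odd_gperp: "2 * m \<le> N - 1 \<Longrightarrow> gperp (phi n (Suc (2 * m)) 0)"
proof -
  assume m: "2 * m \<le> N - 1"
  then obtain \<alpha> :: real where al: "\<alpha> > 0" and eq: "pw Z (2 * m) (phi n 1 0) =
    (\<lambda>i. complex_of_real \<alpha> * phi n (Suc (2 * m)) 0 i)"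
    using a_form[of "2 * m"] by auto
  have g: "gperp (pw Z (2 * m) (phi n 1 0))" using m by (intro gperp_gen) (auto simp: gens_iff)
  have "phi n (Suc (2 * m)) 0 = (\<lambda>i. complex_of_real (1 / \<alpha>) * pw Z (2 * m) (phi n 1 0) i)"
    unfolding eq using al by (simp add: field_simps)
  show ?thesis unfolding \<open>phi n (Suc (2 * m)) 0 = _\<close> by (rule gperp_scale[OF g])
qed


lemma gen_struct:
  assumes g: "g \<in> gens N n"
  shows "g = ket KMinus \<or> g = ket KPlus \<or> (\<exists>j. 1 \<le> j \<and> j \<le> N \<and> lev j g
     \<and> (j \<le> N - 1 \<longrightarrow> gperp (opapp I Z g)) \<and> (2 \<le> j \<longrightarrow> gperp (opapp I Zs g)))"
proof -
  have pN: "phi n N 0 \<in> vecs I" using N2 by (intro phi_vecs) auto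
  have lN: "lev N (phi n N 0)" by (rule lev_phi)
  consider "g = ket KMinus" | "g = ket KPlus"
    | (A) m where "m \<le> N - 1" "g = pw Z m (phi n 1 0)"
    | (B) m where "m \<le> N - 1" "g = pw Zs m (phi n N 0)"
    | (C) m s where "1 \<le> m" "2 * m \<le> N - 1" "1 \<le> s" "s \<le> 2 * m" "g = pw Zs s (phi n (2 * m + 1) 0)"
    using g unfolding gens_iff by blast
  thus ?thesis
  proof cases
    case (A m)
    have "1 \<le> Suc m \<and> Suc m \<le> N \<and> lev (Suc m) g
     \<and> (Suc m \<le> N - 1 \<longrightarrow> gperp (opapp I Z g)) \<and> (2 \<le> Suc m \<longrightarrow> gperp (opapp I Zs g))"
    proof (intro conjI impI)
      show "1 \<le> Suc m" by simp
      show "Suc m \<le> N" using A N2 by simp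
      show "lev (Suc m) g" using A a_lev by simp
    next
      assume "Suc m \<le> N - 1"
      hence "opapp I Z g \<in> gens N n" unfolding A(2) pw_Suc[symmetric] gens_iff by blast
      thus "gperp (opapp I Z g)" by (rule gperp_gen)
    next
      assume m1: "2 \<le> Suc m"
      obtain \<alpha> :: real where eq: "g =
        (\<lambda>i. complex_of_real \<alpha> * (if even m then phi n (Suc m) 0 i else ket (Ket (Suc m) 0) i))"
        using a_form A by blast
      show "gperp (opapp I Zs g)"
      proof (cases "even m")
        case True
        then obtain m' where m': "m = 2 * m'" by blast
        have "opapp I Zs g = (\<lambda>i. complex_of_real \<alpha> * opapp I Zs (phi n (2 * m' + 1) 0) i)"
          unfolding eq using True m' by (simp add: opapp_scale)
        also have "opapp I Zs (phi n (2 * m' + 1) 0) = pw Zs 1 (phi n (2 * m' + 1) 0)"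
          using pw_Suc[of Zs 0 "phi n (2 * m' + 1) 0"] pw_0[OF phi_vecs[of "2 * m' + 1" 0]] A m' N2 by simp
        finally have e: "opapp I Zs g = (\<lambda>i. complex_of_real \<alpha> * pw Zs 1 (phi n (2 * m' + 1) 0) i)" .
        have "pw Zs 1 (phi n (2 * m' + 1) 0) \<in> gens N n"
          unfolding gens_iff using A m' m1 by (intro disjI2 disjI2 disjI2 disjI2 exI[of _ m'] exI[of _ 1]) auto
        thus ?thesis unfolding e by (intro gperp_scale gperp_gen)
      next
        case False
        then obtain m'' where m'': "m = Suc (2 * m'')" by (metis oddE Suc_eq_plus1)
        have "opapp I Zs g = (\<lambda>i. complex_of_real \<alpha> * opapp I Zs (ket (Ket (Suc m) 0)) i)"
          unfolding eq using False by (simp add: opapp_scale)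
        also have "opapp I Zs (ket (Ket (Suc m) 0)) = phi n m 0"
          using A m1 by (intro K1) auto
        finally have e: "opapp I Zs g = (\<lambda>i. complex_of_real \<alpha> * phi n (Suc (2 * m'')) 0 i)" using m'' by simp
        show ?thesis unfolding e using A m'' by (intro gperp_scale phi_odd_gperp) auto
      qed
    qed
    thus ?thesis by blast
  next
    case (B m)
    have lg: "lev (N - m) g" unfolding B(2) using B N2 by (intro zs_lev[OF lN]) auto
    have "1 \<le> N - m \<and> N - m \<le> N \<and> lev (N - m) g
     \<and> (N - m \<le> N - 1 \<longrightarrow> gperp (opapp I Z g)) \<and> (2 \<le> N - m \<longrightarrow> gperp (opapp I Zs g))"
    proof (intro conjI impI)
      show "1 \<le> N - m" "N - m \<le> N" using B N2 by auto
      show "lev (N - m) g" by (rule lg)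
    next
      assume "N - m \<le> N - 1"
      then obtain m0 where m0: "m = Suc m0" using N2 by (cases m) auto
      have l0: "lev (N - m0) (pw Zs m0 (phi n N 0))" using B N2 m0 by (intro zs_lev[OF lN]) auto
      have "opapp I Z g = pw Zs m0 (phi n N 0)"
        unfolding B(2) m0 pw_Suc using B m0 by (intro K4[OF l0]) auto
      moreover have "pw Zs m0 (phi n N 0) \<in> gens N n" unfolding gens_iff using B m0 by (intro disjI2 disjI2 disjI1 exI[of _ m0]) auto
      ultimately show "gperp (opapp I Z g)" using gperp_gen by simp
    next
      assume "2 \<le> N - m"
      hence "opapp I Zs g \<in> gens N n" unfolding B(2) pw_Suc[symmetric] gens_iff by (intro disjI2 disjI2 disjI1 exI[of _ "Suc m"] conjI refl) auto
      thus "gperp (opapp I Zs g)" by (rule gperp_gen)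
    qed
    thus ?thesis by blast
  next
    case (C m s)
    define J where "J = 2 * m + 1"
    have J: "1 \<le> J" "J \<le> N" using C unfolding J_def by auto
    have lJ: "lev J (phi n J 0)" by (rule lev_phi)
    have g': "g = pw Zs s (phi n J 0)" using C J_def by simp
    have lg: "lev (J - s) g" unfolding g' using C J by (intro zs_lev[OF lJ]) (auto simp: J_def)
    have "1 \<le> J - s \<and> J - s \<le> N \<and> lev (J - s) g
     \<and> (J - s \<le> N - 1 \<longrightarrow> gperp (opapp I Z g)) \<and> (2 \<le> J - s \<longrightarrow> gperp (opapp I Zs g))"
    proof (intro conjI impI)
      show "1 \<le> J - s" "J - s \<le> N" using C J by (auto simp: J_def)
      show "lev (J - s) g" by (rule lg)
    next
      obtain s0 where s0: "s = Suc s0" using C by (cases s) auto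
      have l0: "lev (J - s0) (pw Zs s0 (phi n J 0))" using C J s0 by (intro zs_lev[OF lJ]) (auto simp: J_def)
      have e: "opapp I Z g = pw Zs s0 (phi n J 0)"
        unfolding g' s0 pw_Suc using C s0 J by (intro K4[OF l0]) (auto simp: J_def)
      show "gperp (opapp I Z g)"
      proof (cases "s0 = 0")
        case True
        have "opapp I Z g = phi n (Suc (2 * m)) 0" unfolding e True using J
          by (subst pw_0) (auto intro: phi_vecs simp: J_def)
        thus ?thesis using phi_odd_gperp C by simp
      next
        case False
        have "pw Zs s0 (phi n J 0) \<in> gens N n" unfolding gens_iff J_def using C s0 False by (intro disjI2 disjI2 disjI2 disjI2 exI[of _ m] exI[of _ s0] conjI refl) auto
        thus ?thesis unfolding e by (rule gperp_gen)
      qed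
    next
      assume "2 \<le> J - s"
      hence "opapp I Zs g \<in> gens N n" unfolding g' pw_Suc[symmetric] gens_iff J_def using C
        by (intro disjI2 disjI2 disjI2 disjI2 exI[of _ m] exI[of _ "Suc s"]) (auto simp: J_def)
      thus "gperp (opapp I Zs g)" by (rule gperp_gen)
    qed
    thus ?thesis by blast
  qed auto
qed


lemma adj_adj[simp]: "adj (adj A) = A"
  unfolding adj_def by simp

lemma gperp_Zop:
  assumes g: "g \<in> gens N n" and k: "1 \<le> k" "k \<le> N - 1"
  shows "gperp (opapp I (Zop n k) g) \<and> gperp (opapp I (adj (Zop n k)) g)"
  using gen_struct[OF g]
proof (elim disjE exE conjE)
  fix j assume j: "1 \<le> j" "j \<le> N" "lev j g" and hz: "j \<le> N - 1 \<longrightarrow> gperp (opapp I Z g)"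
    and hzs: "2 \<le> j \<longrightarrow> gperp (opapp I Zs g)"
  show ?thesis
    unfolding Zop_lev[OF j(3) k] adjZop_lev[OF j(3) k] using hz hzs k
    by (auto simp: gperp_zero)
qed (auto simp: ketPM_ops gperp_zero)

lemma gperp_Pk:
  assumes g: "g \<in> gens N n"
  shows "gperp (opapp I (Pk n j') g)"
  using gen_struct[OF g]
proof (elim disjE exE conjE)
  fix j assume j: "1 \<le> j" "j \<le> N" "lev j g"
  show ?thesis unfolding Pk_lev[OF j(3) j(1) j(2)] using gperp_gen[OF g] by (auto simp: gperp_zero)
qed (auto simp: ketPM_ops gperp_zero)

lemma opapp_outer: "opapp I (outer x y) g = (\<lambda>i. inner I y g * x i)"
  unfolding opapp_def outer_def inner_def by (rule ext) (simp add: sum_distrib_left mult_ac)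

lemma adj_outer: "adj (outer x y) = outer y x"
  unfolding adj_def outer_def by (intro ext) simp

definition rows :: "qop \<Rightarrow> bool" where
  "rows B \<longleftrightarrow> (\<forall>i j. i \<notin> I \<longrightarrow> B i j = 0)"

lemma rows_vecs: "rows B \<Longrightarrow> opapp I B v \<in> vecs I"
  unfolding rows_def vecs_def opapp_def by auto

definition good :: "qop \<Rightarrow> bool" where
  "good B \<longleftrightarrow> (\<forall>g\<in>gens N n. gperp (opapp I B g)) \<and> (\<forall>g\<in>gens N n. gperp (opapp I (adj B) g))
     \<and> rows B \<and> rows (adj B)"

lemma good_Zop: "1 \<le> k \<Longrightarrow> k \<le> N - 1 \<Longrightarrow> good (Zop n k)"
  unfolding good_def rows_def using gperp_Zop
  by (auto simp: Zop_def adj_def Ket_I_iff split: lab.splits)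

lemma adj_Pk: "adj (Pk n j) = Pk n j"
  unfolding adj_def Pk_def by (intro ext) auto

lemma good_Pk: "1 \<le> j \<Longrightarrow> j \<le> N \<Longrightarrow> good (Pk n j)"
  unfolding good_def rows_def adj_Pk using gperp_Pk
  by (auto simp: Pk_def Ket_I_iff)

lemma good_outer:
  assumes "x \<in> gens N n" "y \<in> gens N n" "x \<in> vecs I" "y \<in> vecs I"
  shows "good (outer x y)"
  unfolding good_def rows_def adj_outer opapp_outer
  using assms by (auto intro!: gperp_scale[OF gperp_gen] simp: outer_def vecs_def)

lemma ket_gens: "ket KPlus \<in> gens N n" "ket KMinus \<in> gens N n"
  unfolding gens_iff by auto

lemma phi1_gens: "phi n 1 0 \<in> gens N n"
proof -
  have "pw Z 0 (phi n 1 0) = phi n 1 0" using N2 by (intro pw_0 phi_vecs) auto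
  moreover have "pw Z 0 (phi n 1 0) \<in> gens N n" unfolding gens_iff by blast
  ultimately show ?thesis by simp
qed

lemma phiN_gens: "phi n N 0 \<in> gens N n"
proof -
  have "pw Zs 0 (phi n N 0) = phi n N 0" using N2 by (intro pw_0 phi_vecs) auto
  moreover have "pw Zs 0 (phi n N 0) \<in> gens N n" unfolding gens_iff by blast
  ultimately show ?thesis by simp
qed

lemma vecs_basic: "ket KPlus \<in> vecs I" "ket KMinus \<in> vecs I" "phi n 1 0 \<in> vecs I" "phi n N 0 \<in> vecs I"
  using ket_vecs phi_vecs N2 by auto

lemma orthc_sub: "x \<in> orthc I S \<Longrightarrow> y \<in> orthc I S \<Longrightarrow> x - y \<in> orthc I S"
  unfolding orthc_def vecs_def by (auto simp: inner_diff_right)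

lemma V_inv:
  assumes "good B" "v \<in> Vsp N n"
  shows "opapp I B v \<in> Vsp N n" "opapp I (adj B) v \<in> Vsp N n"
proof -
  have r: "rows B" "rows (adj B)" using assms(1) unfolding good_def by auto
  have v: "\<forall>g\<in>gens N n. inner I g v = 0" "v \<in> vecs I" using assms(2) unfolding Vsp_def orthc_def by auto
  show "opapp I B v \<in> Vsp N n" unfolding Vsp_def orthc_def
  proof (intro CollectI conjI ballI)
    show "opapp I B v \<in> vecs I" by (rule rows_vecs[OF r(1)])
    fix g assume g: "g \<in> gens N n"
    have "gperp (opapp I (adj B) g)" using assms(1) g unfolding good_def by auto
    thus "inner I g (opapp I B v) = 0" unfolding inner_adj gperp_def using assms(2) by auto
  qed
  show "opapp I (adj B) v \<in> Vsp N n" unfolding Vsp_def orthc_def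
  proof (intro CollectI conjI ballI)
    show "opapp I (adj B) v \<in> vecs I" using r by (intro rows_vecs) auto
    fix g assume g: "g \<in> gens N n"
    have "gperp (opapp I B g)" using assms(1) g unfolding good_def by auto
    thus "inner I g (opapp I (adj B) v) = 0" unfolding inner_adj gperp_def adj_adj using assms(2) by auto
  qed
qed

lemma W_inv:
  assumes "good B" "w \<in> orthc I (Vsp N n)"
  shows "opapp I B w \<in> orthc I (Vsp N n)" "opapp I (adj B) w \<in> orthc I (Vsp N n)"
proof -
  have r: "rows B" "rows (adj B)" using assms(1) unfolding good_def by auto
  show "opapp I B w \<in> orthc I (Vsp N n)" unfolding orthc_def
  proof (intro CollectI conjI ballI)
    show "opapp I B w \<in> vecs I" using r by (intro rows_vecs) auto
    fix u assume u: "u \<in> Vsp N n"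
    have "opapp I (adj B) u \<in> Vsp N n" using V_inv[OF assms(1) u] by simp
    thus "inner I u (opapp I B w) = 0" unfolding inner_adj using assms(2) unfolding orthc_def by auto
  qed
  show "opapp I (adj B) w \<in> orthc I (Vsp N n)" unfolding orthc_def
  proof (intro CollectI conjI ballI)
    show "opapp I (adj B) w \<in> vecs I" using r by (intro rows_vecs) auto
    fix u assume u: "u \<in> Vsp N n"
    have "opapp I B u \<in> Vsp N n" using V_inv[OF assms(1) u] by simp
    thus "inner I u (opapp I (adj B) w) = 0" unfolding inner_adj adj_adj using assms(2) unfolding orthc_def by auto
  qed
qed

definition cm :: "qop \<Rightarrow> qop \<Rightarrow> bool" where
  "cm p A \<longleftrightarrow> (\<forall>i\<in>I. \<forall>j\<in>I. opmult I p A i j = opmult I A p i j)"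

lemma good_cm:
  assumes "good B" "orth_proj I (orthc I (Vsp N n)) p" "orth_proj I (Vsp N n) q"
  shows "cm p B" "cm q B"
proof -
  have r: "rows B" using assms(1) unfolding good_def by auto
  show "cm p B" unfolding cm_def
    by (intro ballI comm_proj[OF fin assms(2)])
       (use orthc_sub W_inv[OF assms(1)] rows_vecs[OF r] in auto)
  show "cm q B" unfolding cm_def
    by (intro ballI comm_proj[OF fin assms(3)])
       (use orthc_sub V_inv[OF assms(1)] rows_vecs[OF r] in \<open>auto simp: Vsp_def\<close>)
qed


lemma opmult_add: "opmult J A (B + C) = opmult J A B + opmult J A C" "opmult J (B + C) A = opmult J B A + opmult J C A"
  unfolding opmult_def by (auto simp: fun_eq_iff distrib_left distrib_right sum.distrib)

lemma opmult_diff: "opmult J A (B - C) = opmult J A B - opmult J A C" "opmult J (B - C) A = opmult J B A - opmult J C A"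
  unfolding opmult_def by (auto simp: fun_eq_iff right_diff_distrib left_diff_distrib sum_subtractf)

lemma opmult_scl: "opmult J A (scl c B) = scl c (opmult J A B)" "opmult J (scl c B) A = scl c (opmult J B A)"
  unfolding opmult_def scl_def by (auto simp: fun_eq_iff sum_distrib_left mult_ac)

lemma opmult_zero: "opmult J A 0 = 0" "opmult J 0 A = 0"
  unfolding opmult_def by (auto simp: fun_eq_iff)

lemma cm_add: "cm p A \<Longrightarrow> cm p B \<Longrightarrow> cm p (A + B)"
  unfolding cm_def opmult_add by simp

lemma cm_diff: "cm p A \<Longrightarrow> cm p B \<Longrightarrow> cm p (A - B)"
  unfolding cm_def opmult_diff by simp

lemma cm_scl: "cm p A \<Longrightarrow> cm p (scl c A)"
  unfolding cm_def opmult_scl by (simp add: scl_def)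

lemma cm_zero: "cm p 0"
  unfolding cm_def opmult_zero by simp

lemma cm_sum: "(\<And>s. s \<in> S \<Longrightarrow> cm p (f s)) \<Longrightarrow> cm p (sum f S)"
proof (induction S rule: infinite_finite_induct)
  case (infinite A) then have "sum f A = 0" by simp then show ?case by (simp only: cm_zero)
next
  case empty then show ?case by (simp only: sum.empty cm_zero)
next
  case (insert x F)
  have "cm p (f x + sum f F)" by (rule cm_add) (use insert in auto)
  thus ?case by (simp only: sum.insert[OF insert.hyps])
qed

lemma cm_mult:
  assumes "cm p A" "cm p B"
  shows "cm p (opmult I A B)"
  unfolding cm_def
proof (intro ballI)
  fix i j assume ij: "i \<in> I" "j \<in> I"
  have "opmult I p (opmult I A B) i j = opmult I (opmult I p A) B i j" by (simp add: opmult_assoc)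
  also have "\<dots> = opmult I (opmult I A p) B i j"
    unfolding opmult_def[of I _ B] using assms(1) ij unfolding cm_def by (intro sum.cong) auto
  also have "\<dots> = opmult I A (opmult I p B) i j" by (simp add: opmult_assoc)
  also have "\<dots> = opmult I A (opmult I B p) i j"
    unfolding opmult_def[of I A] using assms(2) ij unfolding cm_def by (intro sum.cong) auto
  also have "\<dots> = opmult I (opmult I A B) p i j" by (simp add: opmult_assoc)
  finally show "opmult I p (opmult I A B) i j = opmult I (opmult I A B) p i j" .
qed

lemma cm_adj:
  assumes hp: "\<forall>i\<in>I. \<forall>j\<in>I. adj p i j = p i j" and c: "cm p A"
  shows "cm p (adj A)"
  unfolding cm_def
proof (intro ballI)
  fix i j assume ij: "i \<in> I" "j \<in> I"
  have h: "cnj (p a b) = p b a" if "a \<in> I" "b \<in> I" for a b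
    using hp that unfolding adj_def by auto
  have "opmult I (adj A) p i j = (\<Sum>l\<in>I. cnj (A l i) * p l j)" unfolding opmult_def adj_def ..
  also have "\<dots> = cnj (\<Sum>l\<in>I. cnj (p l j) * A l i)" by (simp add: mult.commute)
  also have "\<dots> = cnj (\<Sum>l\<in>I. p j l * A l i)" using h ij by (intro arg_cong[where f=cnj] sum.cong) auto
  also have "(\<Sum>l\<in>I. p j l * A l i) = (\<Sum>l\<in>I. A j l * p l i)"
    using c ij unfolding cm_def opmult_def by auto
  also have "cnj (\<Sum>l\<in>I. A j l * p l i) = (\<Sum>l\<in>I. cnj (A j l) * cnj (p l i))" by simp
  also have "\<dots> = (\<Sum>l\<in>I. p i l * cnj (A j l))" using h ij by (intro sum.cong) (auto simp: mult.commute)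
  also have "\<dots> = opmult I p (adj A) i j" unfolding opmult_def adj_def ..
  finally show "opmult I p (adj A) i j = opmult I (adj A) p i j" by simp
qed

lemma cm_Heff:
  assumes hp: "\<forall>i\<in>I. \<forall>j\<in>I. adj p i j = p i j" and g: "\<And>B. good B \<Longrightarrow> cm p B"
  shows "cm p (Heff N n gm gp)"
proof -
  have o: "cm p (outer x y)" if "x \<in> gens N n" "y \<in> gens N n" "x \<in> vecs I" "y \<in> vecs I" for x y
    using g good_outer that by blast
  have z: "cm p (Zop n k)" if "k \<in> {1..N-1}" for k using g good_Zop that by auto
  have pk: "cm p (Pk n (Suc k))" if "k \<in> {1..N-1}" for k using g good_Pk that by auto
  have s: "cm p (\<Sum>k\<in>{1..N-1}. scl (of_real (gm (WLev k))) (absZ (labels N n) n k)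
                     - scl (of_real (gp (WLev k))) (Pk n (Suc k)))"
    unfolding absZ_def
    by (intro cm_sum cm_diff cm_scl cm_mult cm_adj[OF hp] z pk)
  show ?thesis unfolding Heff_def
    by (intro cm_add cm_diff cm_scl s o ket_gens phi1_gens phiN_gens vecs_basic)
qed

lemma cm_kraus:
  assumes g: "\<And>B. good B \<Longrightarrow> cm p B" and w: "w \<in> freqs N"
  shows "cm p (kraus N n Gm Gp e w)"
proof -
  have o: "cm p (outer x y)" if "x \<in> gens N n" "y \<in> gens N n" "x \<in> vecs I" "y \<in> vecs I" for x y
    using g good_outer that by blast
  show ?thesis
  proof (cases w)
    case WPlus
    then show ?thesis by (cases e) (auto simp: kraus_def intro!: cm_scl o ket_gens phi1_gens[simplified] vecs_basic[simplified])
  next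
    case WMinus
    then show ?thesis by (cases e) (auto simp: kraus_def cm_zero intro!: cm_scl o ket_gens phiN_gens vecs_basic)
  next
    case (WLev k)
    hence k: "1 \<le> k" "k \<le> N - 1" using w unfolding freqs_def by auto
    have "good (Zop n k)" by (rule good_Zop[OF k])
    hence "good (adj (Zop n k))" unfolding good_def by simp
    then show ?thesis using WLev g good_Zop[OF k] by (cases e) (auto simp: kraus_def intro!: cm_scl)
  qed
qed

lemma Lstar_zero:
  assumes hp: "\<forall>i\<in>I. \<forall>j\<in>I. adj p i j = p i j" and ch: "cm p (Heff N n gm gp)"
    and ck: "\<And>w e. w \<in> freqs N \<Longrightarrow> cm p (kraus N n Gm Gp e w)"
    and ij: "i \<in> I" "j \<in> I"
  shows "Lstar N n Gm Gp gm gp p i j = 0"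
proof -
  have t: "(let L = kraus N n Gm Gp e w; LL = opmult I (adj L) L in
              opmult I (opmult I (adj L) p) L - scl (1/2) (opmult I LL p + opmult I p LL)) i j = 0"
    if w: "w \<in> freqs N" for w e
  proof -
    define L where "L = kraus N n Gm Gp e w"
    define LL where "LL = opmult I (adj L) L"
    have cL: "cm p L" using ck w unfolding L_def by blast
    have cLs: "cm p (adj L)" by (rule cm_adj[OF hp cL])
    have cLL: "cm p LL" unfolding LL_def by (rule cm_mult[OF cLs cL])
    have "opmult I (opmult I (adj L) p) L i j = opmult I (opmult I p (adj L)) L i j"
      unfolding opmult_def[of I _ L] using cLs ij unfolding cm_def by (intro sum.cong) auto
    also have "\<dots> = opmult I p LL i j" unfolding LL_def by (simp add: opmult_assoc)
    finally have e1: "opmult I (opmult I (adj L) p) L i j = opmult I p LL i j" .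
    have e2: "opmult I LL p i j = opmult I p LL i j" using cLL ij unfolding cm_def by auto
    show ?thesis unfolding Let_def L_def[symmetric] LL_def[symmetric]
      using e1 e2 by (simp add: scl_def)
  qed
  have h: "opmult I (Heff N n gm gp) p i j = opmult I p (Heff N n gm gp) i j" using ch ij unfolding cm_def by auto
  define S where "S = (\<Sum>w\<in>freqs N. \<Sum>e\<in>{SMinus, SPlus}. (let L = kraus N n Gm Gp e w; LL = opmult I (adj L) L in
              opmult I (opmult I (adj L) p) L - scl (1/2) (opmult I LL p + opmult I p LL)))"
  have S0: "S i j = 0" unfolding S_def sum_fun_app2
    by (intro sum.neutral ballI) (simp only: t)
  have "Lstar N n Gm Gp gm gp p = scl \<i> (opmult I (Heff N n gm gp) p - opmult I p (Heff N n gm gp)) + S"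
    by (simp only: Lstar_def S_def Let_def[of "labels N n"] Let_def[of "Heff N n gm gp"])
  hence "Lstar N n Gm Gp gm gp p i j = \<i> * (opmult I (Heff N n gm gp) p i j - opmult I p (Heff N n gm gp) i j) + S i j"
    by (simp add: scl_def)
  thus ?thesis using h S0 by simp
qed

end

theorem theorem3p3:
  fixes N :: nat and n :: "nat \<Rightarrow> nat"
    and Gm Gp gm gp :: "freq \<Rightarrow> real"
    and p q :: qop
  assumes "N \<ge> 2"
    and "\<forall>k. 1 \<le> k \<and> k < N \<longrightarrow> n (Suc k) \<le> n k"
    and "n N \<ge> 1"
    and "\<forall>w\<in>freqs N. Gm w > 0 \<and> Gp w > 0"
    and "orth_proj (labels N n) (orthc (labels N n) (Vsp N n)) p"
    and "orth_proj (labels N n) (Vsp N n) q"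
  shows "harmonic N n Gm Gp gm gp p \<and> harmonic N n Gm Gp gm gp q"
proof -
  interpret qms N n using assms(1-3) by unfold_locales auto
  have hp: "\<forall>i\<in>labels N n. \<forall>j\<in>labels N n. adj p i j = p i j"
    using proj_herm[OF fin assms(5)] by blast
  have hq: "\<forall>i\<in>labels N n. \<forall>j\<in>labels N n. adj q i j = q i j"
    using proj_herm[OF fin assms(6)] by blast
  have gp: "\<And>B. good B \<Longrightarrow> cm p B" using good_cm[OF _ assms(5) assms(6)] by blast
  have gq: "\<And>B. good B \<Longrightarrow> cm q B" using good_cm[OF _ assms(5) assms(6)] by blast
  have "harmonic N n Gm Gp gm gp p"
    unfolding harmonic_def using hp Lstar_zero[OF hp cm_Heff[OF hp gp] cm_kraus[OF gp]] by blast
  moreover have "harmonic N n Gm Gp gm gp q"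
    unfolding harmonic_def using hq Lstar_zero[OF hq cm_Heff[OF hq gq] cm_kraus[OF gq]] by blast
  ultimately show ?thesis ..
qed

end
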